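(* Let $p\in(1,2)$. There exists a constant $C_p>0$ such that for all real numbers $a,b$ and every $\mu\in(0,1)$ with $|a-b|\ge\mu\max(|a|,|b|)$, $G(a-b)\le\frac{C_p}{\mu^{2-p}}(a-b)\big(g(a)-g(b)\big).$
   Context: $g(y)=\operatorname{sgn}(y)[(|y|+1)^{p-1}-1]$ and $G(y)=\int_0^yg(s)\,ds=\frac1p[(|y|+1)^p-1]-|y|$. *)

theory Defs
  imports "HOL-Analysis.Analysis"
begin

definition gfun :: "real \<Rightarrow> real \<Rightarrow> real" where
  "gfun p y = sgn y * ((\<bar>y\<bar> + 1) powr (p - 1) - 1)"

definition Gfun :: "real \<Rightarrow> real \<Rightarrow> real" where
  "Gfun p y = (1 / p) * ((\<bar>y\<bar> + 1) powr p - 1) - \<bar>y\<bar>"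

end

theory Submission
  imports Defs
begin

lemma mvt_pow:
  fixes r s t :: real
  assumes "0 < s" "s < t"
  shows "\<exists>z. s < z \<and> z < t \<and> t powr r - s powr r = (t - s) * (r * z powr (r - 1))"
proof -
  have "\<And>x. s \<le> x \<Longrightarrow> x \<le> t \<Longrightarrow> DERIV (\<lambda>x. x powr r) x :> r * x powr (r - 1)"
    using assms by (intro has_real_derivative_powr) auto
  from MVT2[OF assms(2) this] show ?thesis .
qed

lemma L1:
  fixes p u v :: real
  assumes "1 < p" "p < 2" "0 \<le> u" "u \<le> v"
  shows "(v+1) powr (p-1) - (u+1) powr (p-1) \<ge> (p-1) * (v-u) * (v+1) powr (p-2)"
proof (cases "u = v")
  case True then show ?thesis by simp
next
  case False
  then obtain z where z: "u+1 < z" "z < v+1"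
    "(v+1) powr (p-1) - (u+1) powr (p-1) = ((v+1) - (u+1)) * ((p-1) * z powr (p-1-1))"
    using mvt_pow[of "u+1" "v+1" "p-1"] assms by auto
  have "z powr (p-2) \<ge> (v+1) powr (p-2)"
    by (rule powr_mono2') (use assms z in auto)
  hence "(v-u) * ((p-1) * z powr (p-2)) \<ge> (v-u) * ((p-1) * (v+1) powr (p-2))"
    using assms by (intro mult_left_mono) auto
  with z(3) show ?thesis by (simp add: algebra_simps)
qed

lemma L2:
  fixes p y :: real
  assumes "1 < p" "0 \<le> y"
  shows "(y+1) powr p - 1 \<le> p * y * (y+1) powr (p-1)"
proof (cases "y = 0")
  case True then show ?thesis by simp
next
  case False
  then obtain z where z: "1 < z" "z < y+1"
    "(y+1) powr p - 1 powr p = ((y+1) - 1) * (p * z powr (p-1))"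
    using mvt_pow[of "1" "y+1" "p"] assms by auto
  have "z powr (p-1) \<le> (y+1) powr (p-1)"
    by (rule powr_mono2) (use assms z in auto)
  hence "y * (p * z powr (p-1)) \<le> y * (p * (y+1) powr (p-1))"
    using assms by (intro mult_left_mono) auto
  with z(3) show ?thesis by (simp add: algebra_simps)
qed

lemma L3:
  fixes p y :: real
  assumes "1 < p" "p < 2" "0 \<le> y"
  shows "(y+1) powr (p-1) - 1 \<le> y * (y+1) powr (p-2)"
proof -
  have a: "(y+1) powr (p-1) = (y+1) * (y+1) powr (p-2)"
  proof -
    have "(y+1) powr (p-1) = (y+1) powr (1 + (p-2))" by simp
    also have "\<dots> = (y+1) powr 1 * (y+1) powr (p-2)" by (rule powr_add)
    finally show ?thesis using assms by simp
  qed
  have "(y+1) powr (p-2) \<le> 1" using powr_mono2'[of "p-2" 1 "y+1"] assms by simp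
  thus ?thesis using a by (simp add: algebra_simps)
qed


lemma gpos: "0 \<le> y \<Longrightarrow> gfun p y = (y+1) powr (p-1) - 1"
  by (cases "y = 0") (auto simp: gfun_def)

lemma gneg: "y \<le> 0 \<Longrightarrow> gfun p y = - ((-y+1) powr (p-1) - 1)"
  by (cases "y = 0") (auto simp: gfun_def)

lemma keyD:
  fixes p a b :: real
  assumes "1 < p" "p < 2" "b < a"
  shows "gfun p a - gfun p b \<ge> (p-1)*(a-b)*(max \<bar>a\<bar> \<bar>b\<bar> + 1) powr (p-2)"
proof -
  let ?M = "max \<bar>a\<bar> \<bar>b\<bar>"
  have mono: "\<And>x. 0 \<le> x \<Longrightarrow> x \<le> ?M \<Longrightarrow> (?M+1) powr (p-2) \<le> (x+1) powr (p-2)"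
    by (rule powr_mono2') (use assms in auto)
  consider "0 \<le> b" | "a \<le> 0" | "b < 0" "0 < a" by linarith
  then show ?thesis
  proof cases
    case 1
    have "?M = a" using 1 assms by auto
    with L1[OF assms(1,2) 1, of a] 1 assms show ?thesis by (simp add: gpos)
  next
    case 2
    have "?M = -b" using 2 assms by auto
    with L1[OF assms(1,2), of "-a" "-b"] 2 assms show ?thesis by (simp add: gneg algebra_simps)
  next
    case 3
    have ha: "gfun p a \<ge> (p-1)*a*(?M+1) powr (p-2)"
    proof -
      have "gfun p a \<ge> (p-1)*(a-0)*(a+1) powr (p-2)"
        using L1[OF assms(1,2), of 0 a] 3 by (simp add: gpos)
      moreover have "(p-1)*a*(?M+1) powr (p-2) \<le> (p-1)*a*(a+1) powr (p-2)"
        using mono[of a] 3 assms by (intro mult_left_mono) auto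
      ultimately show ?thesis by simp
    qed
    have hb: "- gfun p b \<ge> (p-1)*(-b)*(?M+1) powr (p-2)"
    proof -
      have "- gfun p b \<ge> (p-1)*(-b-0)*(-b+1) powr (p-2)"
        using L1[OF assms(1,2), of 0 "-b"] 3 by (simp add: gneg)
      moreover have "(p-1)*(-b)*(?M+1) powr (p-2) \<le> (p-1)*(-b)*(-b+1) powr (p-2)"
        using mono[of "-b"] 3 assms by (intro mult_left_mono) (auto simp: mult_le_0_iff)
      ultimately show ?thesis by simp
    qed
    from ha hb show ?thesis by (simp add: algebra_simps)
  qed
qed

lemma G_le:
  fixes p y :: real
  assumes "1 < p" "p < 2" "0 \<le> y"
  shows "Gfun p y \<le> y^2 * (y+1) powr (p-2)"
proof -
  have "Gfun p y = (1/p) * ((y+1) powr p - 1) - y" using assms by (simp add: Gfun_def)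
  also have "\<dots> \<le> (1/p) * (p * y * (y+1) powr (p-1)) - y"
    using L2[OF assms(1,3)] assms by (intro diff_right_mono mult_left_mono) auto
  also have "\<dots> = y * ((y+1) powr (p-1) - 1)" using assms by (simp add: algebra_simps)
  also have "\<dots> \<le> y * (y * (y+1) powr (p-2))"
    using L3[OF assms] assms by (intro mult_left_mono) auto
  finally show ?thesis by (simp add: power2_eq_square)
qed

lemma ordered:
  fixes p a b \<mu> :: real
  assumes "1 < p" "p < 2" "b < a" "0 < \<mu>" "\<mu> < 1" "\<bar>a - b\<bar> \<ge> \<mu> * max \<bar>a\<bar> \<bar>b\<bar>"
  shows "Gfun p (a - b) \<le> (1/(p-1)) / \<mu> powr (2 - p) * ((a - b) * (gfun p a - gfun p b))"
proof -
  define y where "y = a - b"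
  define M where "M = max \<bar>a\<bar> \<bar>b\<bar>"
  have y: "0 < y" using assms y_def by auto
  have "\<mu> * M \<le> y" using assms unfolding y_def M_def by auto
  hence "M \<le> y / \<mu>" using assms by (simp add: field_simps)
  hence "M + 1 \<le> (y+1)/\<mu>" using assms y by (simp add: field_simps)
  hence "(M+1) powr (p-2) \<ge> ((y+1)/\<mu>) powr (p-2)"
    using assms y unfolding M_def by (intro powr_mono2') auto
  also have "((y+1)/\<mu>) powr (p-2) = (y+1) powr (p-2) * \<mu> powr (2-p)"
  proof -
    have "((y+1)/\<mu>) powr (p-2) = (y+1) powr (p-2) / \<mu> powr (p-2)"
      using assms y by (simp add: powr_divide)
    moreover have "\<mu> powr (2-p) = 1 / \<mu> powr (p-2)"
      using powr_minus_divide[of \<mu> "p-2"] by simp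
    ultimately show ?thesis by simp
  qed
  finally have h1: "(M+1) powr (p-2) \<ge> (y+1) powr (p-2) * \<mu> powr (2-p)" .
  have D: "gfun p a - gfun p b \<ge> (p-1) * y * ((y+1) powr (p-2) * \<mu> powr (2-p))"
  proof -
    have "(p-1) * y * ((y+1) powr (p-2) * \<mu> powr (2-p)) \<le> (p-1) * y * (M+1) powr (p-2)"
      using h1 assms y by (intro mult_left_mono) auto
    with keyD[OF assms(1-3)] show ?thesis unfolding y_def M_def by simp
  qed
  have mp: "\<mu> powr (2-p) > 0" using assms by simp
  have "y * (gfun p a - gfun p b) \<ge> y * ((p-1) * y * ((y+1) powr (p-2) * \<mu> powr (2-p)))"
    using D y by (intro mult_left_mono) auto
  hence "(1/(p-1)) / \<mu> powr (2 - p) * (y * (gfun p a - gfun p b)) \<ge>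
        (1/(p-1)) / \<mu> powr (2 - p) * (y * ((p-1) * y * ((y+1) powr (p-2) * \<mu> powr (2-p))))"
    using assms mp by (intro mult_left_mono[of _ _ "(1/(p-1)) / \<mu> powr (2 - p)"]) auto
  also have "(1/(p-1)) / \<mu> powr (2 - p) * (y * ((p-1) * y * ((y+1) powr (p-2) * \<mu> powr (2-p))))
      = y^2 * (y+1) powr (p-2)" using assms mp by (simp add: field_simps power2_eq_square)
  finally have "y^2 * (y+1) powr (p-2) \<le> (1/(p-1)) / \<mu> powr (2 - p) * (y * (gfun p a - gfun p b))" .
  with G_le[OF assms(1,2), of y] y
  have "Gfun p y \<le> (1/(p-1)) / \<mu> powr (2 - p) * (y * (gfun p a - gfun p b))" by linarith
  thus ?thesis by (simp only: y_def)
qed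

theorem mainTheorem16:
  fixes p :: real
  assumes "1 < p" and "p < 2"
  shows "\<exists>C > 0. \<forall>a b \<mu> :: real. 0 < \<mu> \<longrightarrow> \<mu> < 1 \<longrightarrow>
           \<bar>a - b\<bar> \<ge> \<mu> * max \<bar>a\<bar> \<bar>b\<bar> \<longrightarrow>
           Gfun p (a - b) \<le> C / \<mu> powr (2 - p) * ((a - b) * (gfun p a - gfun p b))"
proof (intro exI[of _ "1/(p-1)"] conjI allI impI)
  show "0 < 1/(p-1)" using assms by simp
  fix a b \<mu> :: real
  assume h: "0 < \<mu>" "\<mu> < 1" "\<bar>a - b\<bar> \<ge> \<mu> * max \<bar>a\<bar> \<bar>b\<bar>"
  consider "b < a" | "a = b" | "a < b" by linarith
  then show "Gfun p (a - b) \<le> (1/(p-1)) / \<mu> powr (2 - p) * ((a - b) * (gfun p a - gfun p b))"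
  proof cases
    case 1 then show ?thesis using ordered[OF assms 1 h] by simp
  next
    case 2 then show ?thesis by (simp add: Gfun_def)
  next
    case 3
    have "\<bar>b - a\<bar> \<ge> \<mu> * max \<bar>b\<bar> \<bar>a\<bar>" using h by (simp add: abs_minus_commute max.commute)
    from ordered[OF assms 3 h(1,2) this]
    have "Gfun p (b - a) \<le> 1 / (p - 1) / \<mu> powr (2 - p) * ((b - a) * (gfun p b - gfun p a))" .
    moreover have "Gfun p (b - a) = Gfun p (a - b)" by (simp add: Gfun_def abs_minus_commute)
    moreover have "(b - a) * (gfun p b - gfun p a) = (a - b) * (gfun p a - gfun p b)"
      by (simp add: algebra_simps)
    ultimately show ?thesis by simp
  qed
qed

end
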